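(* For all integers $i\geq 1$, $j\in\{1,2\}$ and $1\leq k\leq i+j$, one has $b_{(i,j,k)}>0$.
   Context: Bernoulli numbers $B_n$ are defined by $\frac{t}{e^t-1}=\sum_{n\ge0}B_n\frac{t^n}{n!}$ (so $B_0=1$, $B_1=-1/2$, $B_2=1/6$). For integers $i\ge1$, $j\ge1$, $1\le k\le i+j$, rational numbers $b_{(i,j,k)}$ are defined recursively by $b_{(1,j,k)}=\frac{(-1)^{j+1-k}B_{j+1-k}}{(j+1-k)!}$ and, for $i\ge2$, $b_{(i,j,k)}=\sum_{m=0}^{\min\{j,\,i+j-k\}}\frac{(-1)^mB_m}{m!}\,b_{(i-1,j+1-m,k)}$. *)

theory Defs
  imports "HOL-Computational_Algebra.Formal_Power_Series"
begin

definition bernoulli :: "nat \<Rightarrow> rat" where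
  "bernoulli n = fact n * fps_nth (fps_X / (fps_exp 1 - 1)) n"

text \<open>The numbers b_(i,j,k), defined recursively on i (i \<ge> 1).
  Argument i is shifted: bcoef i j k corresponds to b_(i+1, j, k).\<close>
fun bcoef0 :: "nat \<Rightarrow> nat \<Rightarrow> nat \<Rightarrow> rat" where
  "bcoef0 0 j k = (-1) ^ (j + 1 - k) * bernoulli (j + 1 - k) / fact (j + 1 - k)"
| "bcoef0 (Suc i) j k =
     (\<Sum>m = 0..min j (Suc i + 1 + j - k).
        (-1) ^ m * bernoulli m / fact m * bcoef0 i (j + 1 - m) k)"

definition b :: "nat \<Rightarrow> nat \<Rightarrow> nat \<Rightarrow> rat" where
  "b i j k = bcoef0 (i - 1) j k"


end

theory Submission
  imports Defs
begin
unbundle fps_syntax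

definition lam :: "rat fps" where "lam = fps_ln 1"
definition G :: "rat fps" where "G = fps_X / (fps_exp 1 - 1)"

lemma lam0 [simp]: "lam $ 0 = 0" by (simp add: lam_def)
lemma lam1 [simp]: "lam $ 1 = 1" by (simp add: lam_def fps_ln_nth)
lemma lam1' [simp]: "lam $ Suc 0 = 1" using lam1 by simp
lemma lam2 [simp]: "lam $ 2 = -1/2" by (simp add: lam_def fps_ln_nth)
lemma lam2' [simp]: "lam $ Suc (Suc 0) = -1/2" using lam2 by (simp add: numeral_2_eq_2)

lemma E1_sub: "subdegree (fps_exp (1::rat) - 1) = 1"
  by (rule subdegreeI) auto

lemma G_mult: "G * (fps_exp 1 - 1) = fps_X"
proof -
  have ne: "fps_exp (1::rat) - 1 \<noteq> 0"
    by (metis E1_sub one_neq_zero subdegree_0)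
  have "(fps_exp (1::rat) - 1) dvd fps_X"
    using fps_dvd_iff[OF ne fps_X_neq_zero] E1_sub by simp
  then show ?thesis unfolding G_def by simp
qed

lemma E_lam: "(fps_exp 1 - 1) oo lam = fps_X"
  unfolding lam_def fps_ln_fps_exp_inv[of "1::rat", simplified]
  by (rule fps_inv_fps_exp_compose(2)) simp

lemma G_lam: "(G oo lam) * fps_X = lam"
proof -
  have "(G oo lam) * fps_X = (G oo lam) * ((fps_exp 1 - 1) oo lam)" by (simp add: E_lam)
  also have "\<dots> = (G * (fps_exp 1 - 1)) oo lam" by (simp add: fps_compose_mult_distrib)
  also have "\<dots> = lam" by (simp add: G_mult)
  finally show ?thesis .
qed

lemma key_fps:
  assumes "k \<ge> 1"
  shows "(lam ^ k) $ (Suc n) = (\<Sum>i=0..n. (if k \<le> i + 1 then G $ (i + 1 - k) else 0) * (lam ^ i) $ n)"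
proof -
  have "((G * fps_X ^ (k-1)) oo lam) = (G oo lam) * lam ^ (k-1)"
    by (simp add: fps_compose_mult_distrib fps_compose_power[symmetric])
  hence "((G * fps_X ^ (k-1)) oo lam) * fps_X = lam ^ k"
    using assms G_lam
    by (metis (no_types, lifting) ab_semigroup_mult_class.mult_ac(1) mult.commute power_eq_if not_one_le_zero)
  hence "(lam ^ k) $ Suc n = ((G * fps_X ^ (k-1)) oo lam) $ n"
    by (metis fps_X_mult_nth mult.commute nat.simps(3) diff_Suc_1)
  also have "\<dots> = (\<Sum>i=0..n. (G * fps_X ^ (k-1)) $ i * (lam ^ i) $ n)"
    by (simp add: fps_compose_nth)
  also have "\<dots> = (\<Sum>i=0..n. (if k \<le> i + 1 then G $ (i + 1 - k) else 0) * (lam ^ i) $ n)"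
    apply (rule sum.cong[OF refl])
    using assms by (subst mult.commute) (auto simp: fps_X_power_mult_nth)
  finally show ?thesis .
qed

lemma deriv_rec:
  assumes "k \<ge> 1"
  shows "of_nat (n+1) * (lam ^ k) $ (Suc n) + of_nat n * (lam ^ k) $ n = of_nat k * (lam ^ (k-1)) $ n"
proof -
  have d: "fps_deriv lam = inverse (1 + fps_X)" by (simp add: lam_def fps_ln_deriv)
  have inv: "(1 + fps_X) * inverse (1 + fps_X :: rat fps) = 1"
    by (subst mult.commute) (rule inverse_mult_eq_1, simp)
  have "(1 + fps_X) * fps_deriv (lam ^ k) = of_nat k * lam ^ (k - 1) * ((1 + fps_X) * inverse (1 + fps_X))"
    by (simp add: fps_deriv_power' d algebra_simps)
  also have "\<dots> = of_nat k * lam ^ (k - 1)" by (simp only: inv mult_1_right)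
  finally have "(1 + fps_X) * fps_deriv (lam ^ k) = of_nat k * lam ^ (k - 1)" .
  hence "((1 + fps_X) * fps_deriv (lam ^ k)) $ n = (of_nat k * lam ^ (k - 1)) $ n" by simp
  thus ?thesis by (cases n) (simp_all add: algebra_simps fps_of_nat)
qed
definition c :: "nat \<Rightarrow> rat" where "c m = (-1) ^ m * bernoulli m / fact m"

lemma c_G: "c m = (-1) ^ m * G $ m"
  by (simp add: c_def bernoulli_def G_def)

definition M :: "nat \<Rightarrow> nat \<Rightarrow> rat" where
  "M h k = (if k \<le> h + 1 then c (h + 1 - k) else 0)"

definition ell :: "nat \<Rightarrow> nat \<Rightarrow> rat" where
  "ell n h = (-1) ^ (n + h) * (lam ^ h) $ n"

lemma ell_zero: "n < h \<Longrightarrow> ell n h = 0"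
  using startsby_zero_power_prefix[OF lam0] by (simp add: ell_def)

lemma ell_diag [simp]: "ell n n = 1"
  by (simp add: ell_def startsby_zero_power_nth_same)

lemma ell_0: "ell (Suc n) 0 = 0"
  by (simp add: ell_def)

lemma sign_aux: "k \<le> i + 1 \<Longrightarrow> ((-1::rat) ^ (Suc n + k)) = (-1) ^ (i + 1 - k) * (-1) ^ (n + i)"
proof -
  assume "k \<le> i + 1"
  define d where "d = i + 1 - k"
  have e: "(i + 1 - k) + (n + i) + 2 = (Suc n + k) + 2 * d" using \<open>k \<le> i + 1\<close> by (simp add: d_def)
  have "(-1::rat) ^ (i + 1 - k) * (-1) ^ (n + i) = (-1) ^ ((i + 1 - k) + (n + i) + 2)"
    by (simp add: power_add)
  also have "\<dots> = (-1) ^ (Suc n + k)" unfolding e by (simp add: power_add)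
  finally show ?thesis by simp
qed

lemma ell_rec:
  assumes "k \<ge> 1"
  shows "ell (Suc n) k = (\<Sum>i=0..n. ell n i * M i k)"
proof -
  have "ell (Suc n) k = (-1) ^ (Suc n + k) * (\<Sum>i=0..n. (if k \<le> i + 1 then G $ (i + 1 - k) else 0) * (lam ^ i) $ n)"
    by (simp add: ell_def key_fps[OF assms])
  also have "\<dots> = (\<Sum>i=0..n. ell n i * M i k)"
    unfolding sum_distrib_left
  proof (rule sum.cong[OF refl])
    fix i assume "i \<in> {0..n}"
    show "(-1) ^ (Suc n + k) * ((if k \<le> i + 1 then G $ (i + 1 - k) else 0) * (lam ^ i) $ n) = ell n i * M i k"
    proof (cases "k \<le> i + 1")
      case True
      have "(-1::rat)^(Suc n+k) * (G $ (i+1-k) * lam^i$n) = ((-1)^(i+1-k) * (-1)^(n+i)) * (G $ (i+1-k) * lam^i$n)"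
        by (subst sign_aux[OF True]) (rule refl)
      then show ?thesis using True by (simp add: ell_def M_def c_G mult_ac)
    next
      case False then show ?thesis by (simp add: M_def)
    qed
  qed
  finally show ?thesis .
qed

lemma ell_rec2:
  assumes "k \<ge> 1"
  shows "of_nat (n+1) * ell (Suc n) k = of_nat n * ell n k + of_nat k * ell n (k - 1)"
proof -
  have s: "(-1::rat) ^ (n + (k - 1)) = ((-1) ^ (Suc n + k))"
  proof -
    have "Suc n + k = (n + (k - 1)) + 2" using assms by simp
    then show ?thesis by (simp only: power_add) simp
  qed
  have s3: "(-1::rat) ^ (Suc n + k) = - ((-1) ^ (n + k))" by simp
  have H: "of_nat (n+1) * (lam ^ k) $ (Suc n) + of_nat n * (lam ^ k) $ n - of_nat k * (lam ^ (k-1)) $ n = 0"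
    using deriv_rec[OF assms, of n] by simp
  have "of_nat (n+1) * ell (Suc n) k - (of_nat n * ell n k + of_nat k * ell n (k - 1))
     = - ((-1) ^ (n + k)) * (of_nat (n+1) * (lam ^ k) $ (Suc n) + of_nat n * (lam ^ k) $ n - of_nat k * (lam ^ (k-1)) $ n)"
    unfolding ell_def s s3 by (simp add: algebra_simps)
  then show ?thesis using H by simp
qed

lemma ell_nonneg: "ell n k \<ge> 0"
proof (induction n arbitrary: k)
  case 0
  then show ?case by (cases k) (auto simp: ell_zero)
next
  case (Suc n)
  show ?case
  proof (cases k)
    case 0 then show ?thesis by (simp add: ell_0)
  next
    case (Suc k')
    have "of_nat (n+1) * ell (Suc n) k = of_nat n * ell n k + of_nat k * ell n (k - 1)"
      using Suc by (intro ell_rec2) simp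
    moreover have "of_nat n * ell n k + of_nat k * ell n (k - 1) \<ge> 0"
      using Suc.IH by simp
    ultimately show ?thesis
      by (metis of_nat_0_less_iff zero_less_Suc Suc_eq_plus1 zero_le_mult_iff not_le order_less_le)
  qed
qed

lemma ell_pos: "1 \<le> k \<Longrightarrow> k \<le> n \<Longrightarrow> ell n k > 0"
proof (induction n arbitrary: k)
  case 0
  then show ?case by simp
next
  case (Suc n)
  show ?case
  proof (cases "k = Suc n")
    case True then show ?thesis by simp
  next
    case False
    then have kn: "k \<le> n" "1 \<le> n" using Suc.prems by auto
    have e: "of_nat (n+1) * ell (Suc n) k = of_nat n * ell n k + of_nat k * ell n (k - 1)"
      using Suc.prems by (intro ell_rec2) simp
    have "of_nat n * ell n k > 0" using Suc.IH[OF Suc.prems(1) kn(1)] kn(2) by simp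
    moreover have "of_nat k * ell n (k - 1) \<ge> 0" using ell_nonneg by simp
    ultimately have "of_nat (n+1) * ell (Suc n) k > 0" using e by linarith
    then show ?thesis by (simp add: zero_less_mult_iff)
  qed
qed


lemma sum_from0:
  fixes f :: "nat \<Rightarrow> 'a::comm_monoid_add" and N :: nat
  shows "(\<Sum>h=0..N. f h) = f 0 + (\<Sum>h=1..N. f h)"
  using sum.atLeast_Suc_atMost[of 0 N f] by simp

fun P :: "nat \<Rightarrow> nat \<Rightarrow> nat \<Rightarrow> rat" where
  "P 0 j k = (if j = k then 1 else 0)"
| "P (Suc n) j k = (\<Sum>m=0..j. c m * P n (j + 1 - m) k)"

lemma P_vanish: "n + j < k \<Longrightarrow> P n j k = 0"
  by (induction n arbitrary: j) auto

lemma P_one: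
  assumes "1 \<le> k"
  shows "P (Suc 0) j k = M j k"
proof (cases "k \<le> j + 1")
  case True
  have "P (Suc 0) j k = (\<Sum>m=0..j. c m * P 0 (j + 1 - m) k)" by simp
  also have "\<dots> = (\<Sum>m=0..j. if m = j + 1 - k then c m else 0)"
    by (rule sum.cong[OF refl]) (use True in auto)
  also have "\<dots> = c (j + 1 - k)" using assms True by (simp add: sum.delta)
  finally show ?thesis using True by (simp add: M_def)
next
  case False
  then show ?thesis by (simp add: M_def P_vanish del: P.simps)
qed

lemma P_last:
  assumes "1 \<le> j" "1 \<le> k" "n + j \<le> B"
  shows "P (Suc n) j k = (\<Sum>h=1..B. P n j h * M h k)"
  using assms
proof (induction n arbitrary: j B)
  case 0
  have "(\<Sum>h=1..B. P 0 j h * M h k) = (\<Sum>h=1..B. if h = j then M j k else 0)"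
    by (rule sum.cong) auto
  also have "\<dots> = M j k" using 0 by (simp add: sum.delta)
  finally show ?case using P_one[OF 0(2)] by simp
next
  case (Suc n)
  have "P (Suc (Suc n)) j k = (\<Sum>m=0..j. c m * P (Suc n) (j + 1 - m) k)" by simp
  also have "\<dots> = (\<Sum>m=0..j. c m * (\<Sum>h=1..B. P n (j + 1 - m) h * M h k))"
  proof (rule sum.cong[OF refl])
    fix m assume "m \<in> {0..j}"
    then have "P (Suc n) (j + 1 - m) k = (\<Sum>h=1..B. P n (j + 1 - m) h * M h k)"
      by (intro Suc.IH) (use Suc.prems in auto)
    then show "c m * P (Suc n) (j + 1 - m) k = c m * (\<Sum>h=1..B. P n (j + 1 - m) h * M h k)" by simp
  qed
  also have "\<dots> = (\<Sum>h=1..B. (\<Sum>m=0..j. c m * P n (j + 1 - m) h) * M h k)"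
    unfolding sum_distrib_left sum_distrib_right mult.assoc by (rule sum.swap)
  also have "\<dots> = (\<Sum>h=1..B. P (Suc n) j h * M h k)" by simp
  finally show ?case .
qed

lemma bcoef0_P:
  assumes "1 \<le> j" "1 \<le> k" "k \<le> i + 1 + j"
  shows "bcoef0 i j k = P (Suc i) j k"
  using assms
proof (induction i arbitrary: j)
  case 0
  then show ?case by (subst P_one) (auto simp: M_def c_def)
next
  case (Suc i)
  have "bcoef0 (Suc i) j k = (\<Sum>m=0..min j (Suc i + 1 + j - k). c m * bcoef0 i (j + 1 - m) k)"
    by (simp add: c_def)
  also have "\<dots> = (\<Sum>m=0..min j (Suc i + 1 + j - k). c m * P (Suc i) (j + 1 - m) k)"
  proof (rule sum.cong[OF refl])
    fix m assume "m \<in> {0..min j (Suc i + 1 + j - k)}"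
    then have "bcoef0 i (j + 1 - m) k = P (Suc i) (j + 1 - m) k"
      by (intro Suc.IH) (use Suc.prems in auto)
    then show "c m * bcoef0 i (j + 1 - m) k = c m * P (Suc i) (j + 1 - m) k" by simp
  qed
  also have "\<dots> = (\<Sum>m=0..j. c m * P (Suc i) (j + 1 - m) k)"
    by (rule sum.mono_neutral_left) (auto simp del: P.simps simp add: P_vanish)
  also have "\<dots> = P (Suc (Suc i)) j k" by simp
  finally show ?case .
qed

lemma P_j1: "1 \<le> k \<Longrightarrow> P n 1 k = ell (Suc n) k"
proof (induction n arbitrary: k)
  case 0
  then show ?case by (cases "k = 1") (auto simp: ell_zero)
next
  case (Suc n)
  have "P (Suc n) 1 k = (\<Sum>h=1..Suc n. P n 1 h * M h k)" by (rule P_last) (use Suc in auto)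
  also have "\<dots> = (\<Sum>h=1..Suc n. ell (Suc n) h * M h k)"
  proof (rule sum.cong[OF refl])
    fix h assume "h \<in> {1..Suc n}"
    then have "1 \<le> h" by simp
    show "P n 1 h * M h k = ell (Suc n) h * M h k" using Suc.IH[OF \<open>1 \<le> h\<close>] by simp
  qed
  also have "\<dots> = (\<Sum>h=0..Suc n. ell (Suc n) h * M h k)"
    by (simp only: sum_from0 ell_0; simp)
  also have "\<dots> = ell (Suc (Suc n)) k" by (rule ell_rec[symmetric]) (use Suc in auto)
  finally show ?case .
qed

lemma P_j2: "1 \<le> k \<Longrightarrow> P n 2 k = ell (Suc (Suc n)) k - ell (Suc n) k / 2"
proof (induction n arbitrary: k)
  case 0
  have e21: "ell (Suc (Suc 0)) (Suc 0) = 1/2" by (simp add: ell_def)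
  show ?case
  proof (cases "k \<le> 2")
    case True
    then have "k = 1 \<or> k = 2" using 0 by auto
    then show ?thesis by (auto simp: e21 ell_zero numeral_2_eq_2)
  next
    case False then show ?thesis by (simp add: ell_zero)
  qed
next
  case (Suc n)
  have "P (Suc n) 2 k = (\<Sum>h=1..Suc (Suc n). P n 2 h * M h k)" by (rule P_last) (use Suc in auto)
  also have "\<dots> = (\<Sum>h=1..Suc (Suc n). ell (Suc (Suc n)) h * M h k) - (\<Sum>h=1..Suc (Suc n). ell (Suc n) h * M h k) / 2"
  proof -
    have "(\<Sum>h=1..Suc (Suc n). P n 2 h * M h k) = (\<Sum>h=1..Suc (Suc n). ell (Suc (Suc n)) h * M h k - ell (Suc n) h * M h k / 2)"
    proof (rule sum.cong[OF refl])
      fix h assume "h \<in> {1..Suc (Suc n)}"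
      then have "1 \<le> h" by simp
      show "P n 2 h * M h k = ell (Suc (Suc n)) h * M h k - ell (Suc n) h * M h k / 2"
        by (subst Suc.IH[OF \<open>1 \<le> h\<close>]) (simp add: algebra_simps)
    qed
    then show ?thesis by (simp only: sum_subtractf sum_divide_distrib[symmetric])
  qed
  also have "(\<Sum>h=1..Suc (Suc n). ell (Suc (Suc n)) h * M h k) = (\<Sum>h=0..Suc (Suc n). ell (Suc (Suc n)) h * M h k)"
    by (simp only: sum_from0 ell_0; simp)
  also have "\<dots> = ell (Suc (Suc (Suc n))) k" by (rule ell_rec[symmetric]) (use Suc in auto)
  also have "(\<Sum>h=1..Suc (Suc n). ell (Suc n) h * M h k) = (\<Sum>h=0..Suc n. ell (Suc n) h * M h k)"
    by (simp only: sum_from0 ell_0 sum.cl_ivl_Suc ell_zero[of "Suc n" "Suc (Suc n)"]; simp)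
  also have "\<dots> = ell (Suc (Suc n)) k" by (rule ell_rec[symmetric]) (use Suc in auto)
  finally show ?case .
qed

theorem theorem5p1:
  fixes i j k :: nat
  assumes "i \<ge> 1" and "j \<in> {1, 2}" and "1 \<le> k" and "k \<le> i + j"
  shows "b i j k > 0"
proof -
  obtain i' where i': "i = Suc i'" using assms(1) by (cases i) auto
  have bP: "b i j k = P i j k"
    unfolding b_def i' diff_Suc_1 by (rule bcoef0_P) (use assms i' in auto)
  show ?thesis
  proof (cases "j = 1")
    case True
    then show ?thesis using assms bP P_j1 ell_pos by simp
  next
    case False
    then have j2: "j = 2" using assms(2) by auto
    have e: "of_nat (i+1) * ell (Suc i) k = of_nat i * ell i k + of_nat k * ell i (k - 1)"
      using assms(3) by (rule ell_rec2)
    have r2: "of_nat (i+2) * ell (Suc (Suc i)) k = of_nat (i+1) * ell (Suc i) k + of_nat k * ell (Suc i) (k - 1)"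
      using ell_rec2[OF assms(3), of "Suc i"] by simp
    have bv: "b i j k = ell (Suc (Suc i)) k - ell (Suc i) k / 2"
      using bP j2 P_j2[OF assms(3), of i] by simp
    have "of_nat (i+2) * b i j k = of_nat (i+2) * ell (Suc (Suc i)) k - of_nat (i+2) * ell (Suc i) k / 2"
      unfolding bv by (simp add: right_diff_distrib)
    also have "\<dots> = of_nat (i+1) * ell (Suc i) k + of_nat k * ell (Suc i) (k - 1) - of_nat (i+2) * ell (Suc i) k / 2"
      by (simp only: r2)
    also have "\<dots> = of_nat i / 2 * ell (Suc i) k + of_nat k * ell (Suc i) (k - 1)"
      by (simp add: field_simps)
    finally have val: "of_nat (i+2) * b i j k = of_nat i / 2 * ell (Suc i) k + of_nat k * ell (Suc i) (k - 1)" .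
    have pos: "of_nat i / 2 * ell (Suc i) k + of_nat k * ell (Suc i) (k - 1) > 0"
    proof (cases "k \<le> Suc i")
      case True
      have "ell (Suc i) k > 0" using ell_pos assms(3) True by simp
      moreover have "ell (Suc i) (k - 1) \<ge> 0" by (rule ell_nonneg)
      ultimately show ?thesis using assms(1) by (simp add: add_pos_nonneg)
    next
      case False
      then have "k = Suc (Suc i)" using assms(4) j2 by simp
      then show ?thesis by (simp add: ell_zero)
    qed
    have "of_nat (i+2) * b i j k > 0" using val pos by simp
    then show ?thesis by (rule zero_less_mult_pos) simp
  qed
qed

end
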